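(* Let $\beta\in(0,1)$, $n\ge1$, and $\mathbf{x}_0,\mathbf{x}_1,\dots,\mathbf{x}_n\in\mathbb{R}^d$. Let $q_{n,s}:=\beta^{n-s}\frac{1-\beta}{1-\beta^n}$ ($s=1,\dots,n$), let $\mathbf{X}_n$ be the random vector equal to $\mathbf{x}_s$ with probability $q_{n,s}$, and $\overline{\mathbf{x}}_n:=\mathbb{E}[\mathbf{X}_n]$. Then $$\mathbb{E}_{\mathbf{X}_n}\|\mathbf{X}_n-\overline{\mathbf{x}}_n\|^2\le2\sum_{t=1}^n\lambda_{n,t}\|\mathbf{x}_t-\mathbf{x}_{t-1}\|^2,\qquad\text{where }\lambda_{n,t}:=\sum_{i=t}^n\sum_{j=1}^{t-1}q_{n,i}q_{n,j}(i-j).$$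
   Context: Norms are Euclidean. An empty sum equals $0$. *)

theory Defs
  imports "HOL-Analysis.Analysis"
begin

definition qw :: "real \<Rightarrow> nat \<Rightarrow> nat \<Rightarrow> real" where
  "qw \<beta> n s = \<beta> ^ (n - s) * (1 - \<beta>) / (1 - \<beta> ^ n)"

definition xbar :: "real \<Rightarrow> nat \<Rightarrow> (nat \<Rightarrow> 'a::euclidean_space) \<Rightarrow> 'a" where
  "xbar \<beta> n x = (\<Sum>s=1..n. qw \<beta> n s *\<^sub>R x s)"

definition lam :: "real \<Rightarrow> nat \<Rightarrow> nat \<Rightarrow> real" where
  "lam \<beta> n t = (\<Sum>i=t..n. \<Sum>j=1..t-1. qw \<beta> n i * qw \<beta> n j * (real i - real j))"

end

theory Submission
  imports Defs
begin

lemma telescope_cs: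
  fixes x :: "nat \<Rightarrow> 'a::euclidean_space"
  assumes "j \<le> i"
  shows "(norm (x i - x j))\<^sup>2 \<le> real (i - j) * (\<Sum>t=Suc j..i. (norm (x t - x (t - 1)))\<^sup>2)"
  using assms
proof (induction i)
  case 0
  then show ?case by simp
next
  case (Suc i)
  show ?case
  proof (cases "j = Suc i")
    case True then show ?thesis by simp
  next
    case False
    hence ji: "j \<le> i" using Suc.prems by simp
    define a where "a = norm (x i - x j)"
    define b where "b = norm (x (Suc i) - x i)"
    define S where "S = (\<Sum>t=Suc j..i. (norm (x t - x (t - 1)))\<^sup>2)"
    define k where "k = real (i - j)"
    have IH: "a^2 \<le> k * S" using Suc.IH ji unfolding a_def k_def S_def by simp
    have a0: "a \<ge> 0" "b \<ge> 0" "k \<ge> 0" "S \<ge> 0" unfolding a_def b_def k_def S_def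
      by (auto intro: sum_nonneg)
    have tri: "norm (x (Suc i) - x j) \<le> a + b"
    proof -
      have "x (Suc i) - x j = (x i - x j) + (x (Suc i) - x i)" by simp
      thus ?thesis unfolding a_def b_def by (metis norm_triangle_ineq)
    qed
    have sumS: "(\<Sum>t=Suc j..Suc i. (norm (x t - x (t - 1)))\<^sup>2) = S + b^2"
      unfolding S_def b_def using ji by simp
    have key: "(a + b)^2 \<le> (k + 1) * (S + b^2)"
    proof (cases "k = 0")
      case True
      hence "a = 0" using IH a0 by simp
      then show ?thesis using True a0 by (simp add: power2_eq_square)
    next
      case False
      hence kp: "k > 0" using a0 by simp
      have "0 \<le> (a - k*b)^2" by simp
      hence "2*k*a*b \<le> a^2 + k^2*b^2" by (simp add: power2_eq_square algebra_simps)
      also have "\<dots> \<le> k*S + k^2*b^2" using IH by simp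
      finally have "k*(2*a*b) \<le> k*(S + k*b^2)" by (simp add: power2_eq_square algebra_simps)
      hence "2*a*b \<le> S + k*b^2" using kp by simp
      thus ?thesis using IH by (simp add: power2_eq_square algebra_simps)
    qed
    have "(norm (x (Suc i) - x j))^2 \<le> (a+b)^2"
      using tri a0 by (simp add: power_mono)
    also have "\<dots> \<le> (k+1) * (S + b^2)" by (rule key)
    also have "k + 1 = real (Suc i - j)" unfolding k_def using ji by simp
    finally show ?thesis using sumS by simp
  qed
qed

lemma sym_double_sum:
  fixes g :: "nat \<Rightarrow> nat \<Rightarrow> real"
  assumes "finite A" "\<And>i j. g i j = g j i" "\<And>i. g i i = 0"
  shows "(\<Sum>i\<in>A. \<Sum>j\<in>A. g i j) = 2 * (\<Sum>i\<in>A. \<Sum>j\<in>A. if j < i then g i j else 0)"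
proof -
  have "(\<Sum>i\<in>A. \<Sum>j\<in>A. g i j) = (\<Sum>i\<in>A. \<Sum>j\<in>A. (if j < i then g i j else 0) + (if i < j then g i j else 0))"
    by (intro sum.cong refl) (use assms(3) in \<open>auto simp: not_less_iff_gr_or_eq\<close>)
  also have "\<dots> = (\<Sum>i\<in>A. \<Sum>j\<in>A. if j < i then g i j else 0) + (\<Sum>i\<in>A. \<Sum>j\<in>A. if i < j then g i j else 0)"
    by (simp add: sum.distrib)
  also have "(\<Sum>i\<in>A. \<Sum>j\<in>A. if i < j then g i j else 0) = (\<Sum>j\<in>A. \<Sum>i\<in>A. if i < j then g j i else 0)"
    by (subst sum.swap) (intro sum.cong refl, metis assms(2))
  finally show ?thesis by simp
qed

lemma geom_sum_rev:
  fixes \<beta> :: real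
  shows "(\<Sum>s=1..n. \<beta> ^ (n - s)) = (\<Sum>k<n. \<beta> ^ k)"
  by (rule sum.reindex_bij_witness[where i="\<lambda>k. n - k" and j="\<lambda>s. n - s"]) auto

theorem proposition4:
  fixes \<beta> :: real and n :: nat and x :: "nat \<Rightarrow> 'a::euclidean_space"
  assumes "0 < \<beta>" "\<beta> < 1" "1 \<le> n"
  shows "(\<Sum>s=1..n. qw \<beta> n s * (norm (x s - xbar \<beta> n x))\<^sup>2)
           \<le> 2 * (\<Sum>t=1..n. lam \<beta> n t * (norm (x t - x (t - 1)))\<^sup>2)"
proof -
  define q where "q = qw \<beta> n"
  define d where "d = (\<lambda>t. (norm (x t - x (t - 1)))\<^sup>2)"
  define N where "N = {1..n}"
  have fN: "finite N" "N \<noteq> {}" unfolding N_def using assms by auto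
  have bn: "\<beta> ^ n < 1" using assms by (simp add: power_less_one_iff)
  have q0: "q s \<ge> 0" for s unfolding q_def qw_def using assms bn by simp
  have q1: "(\<Sum>s\<in>N. q s) = 1"
  proof -
    have "(\<Sum>s\<in>N. q s) = (\<Sum>s=1..n. \<beta> ^ (n - s)) * (1 - \<beta>) / (1 - \<beta> ^ n)"
      unfolding q_def qw_def N_def by (simp add: sum_divide_distrib sum_distrib_right)
    also have "\<dots> = 1" unfolding geom_sum_rev using assms bn
      by (simp add: sum_gp_strict)
    finally show ?thesis .
  qed
  have xb: "xbar \<beta> n x = (\<Sum>s\<in>N. q s *\<^sub>R x s)" unfolding xbar_def q_def N_def ..
  have jensen: "(norm (x s - xbar \<beta> n x))\<^sup>2 \<le> (\<Sum>j\<in>N. q j * (norm (x s - x j))\<^sup>2)" for s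
  proof -
    have "x s - xbar \<beta> n x = (\<Sum>j\<in>N. q j *\<^sub>R (x s - x j))"
      unfolding xb scaleR_diff_right sum_subtractf scaleR_sum_left[symmetric] q1 by simp
    hence "norm (x s - xbar \<beta> n x) \<le> (\<Sum>j\<in>N. norm (q j *\<^sub>R (x s - x j)))"
      by (simp only: norm_sum)
    also have "\<dots> = (\<Sum>j\<in>N. q j * norm (x s - x j))"
      using q0 by (intro sum.cong refl) simp
    finally have "norm (x s - xbar \<beta> n x) \<le> (\<Sum>j\<in>N. q j * norm (x s - x j))" .
    hence "(norm (x s - xbar \<beta> n x))\<^sup>2 \<le> (\<Sum>j\<in>N. q j * norm (x s - x j))\<^sup>2"
      by (simp add: power_mono)
    also have "\<dots> \<le> (\<Sum>j\<in>N. q j * (norm (x s - x j))\<^sup>2)"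
      using convex_on_sum[OF fN convex_power2, of q "\<lambda>j. norm (x s - x j)"] q1 q0 by simp
    finally show ?thesis .
  qed
  have step1: "(\<Sum>s\<in>N. q s * (norm (x s - xbar \<beta> n x))\<^sup>2)
      \<le> (\<Sum>s\<in>N. \<Sum>j\<in>N. q s * q j * (norm (x s - x j))\<^sup>2)"
  proof (rule sum_mono)
    fix s assume "s \<in> N"
    have "q s * (norm (x s - xbar \<beta> n x))\<^sup>2 \<le> q s * (\<Sum>j\<in>N. q j * (norm (x s - x j))\<^sup>2)"
      by (rule mult_left_mono[OF jensen q0])
    thus "q s * (norm (x s - xbar \<beta> n x))\<^sup>2 \<le> (\<Sum>j\<in>N. q s * q j * (norm (x s - x j))\<^sup>2)"
      by (simp add: sum_distrib_left mult.assoc)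
  qed
  also have step2: "\<dots> = 2 * (\<Sum>i\<in>N. \<Sum>j\<in>N. if j < i then q i * q j * (norm (x i - x j))\<^sup>2 else 0)"
    by (rule sym_double_sum[OF fN(1)]) (auto simp: norm_minus_commute)
  also have "(\<Sum>i\<in>N. \<Sum>j\<in>N. if j < i then q i * q j * (norm (x i - x j))\<^sup>2 else 0)
      \<le> (\<Sum>i\<in>N. \<Sum>j\<in>N. \<Sum>t\<in>N. if j < t \<and> t \<le> i then q i * q j * (real i - real j) * d t else 0)"
  proof (intro sum_mono)
    fix i j assume i: "i \<in> N" and j: "j \<in> N"
    show "(if j < i then q i * q j * (norm (x i - x j))\<^sup>2 else 0)
      \<le> (\<Sum>t\<in>N. if j < t \<and> t \<le> i then q i * q j * (real i - real j) * d t else 0)"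
    proof (cases "j < i")
      case True
      have "{t \<in> N. j < t \<and> t \<le> i} = {Suc j..i}" using i j unfolding N_def by auto
      hence eq: "(\<Sum>t\<in>N. if j < t \<and> t \<le> i then q i * q j * (real i - real j) * d t else 0)
          = q i * q j * (real i - real j) * (\<Sum>t=Suc j..i. d t)"
        using sum.inter_filter[OF fN(1), of "\<lambda>t. q i * q j * (real i - real j) * d t" "\<lambda>t. j < t \<and> t \<le> i"]
        by (simp add: sum_distrib_left)
      have "(norm (x i - x j))\<^sup>2 \<le> (real i - real j) * (\<Sum>t=Suc j..i. d t)"
        using telescope_cs[of j i x] True unfolding d_def by (simp add: of_nat_diff)
      hence "q i * q j * (norm (x i - x j))\<^sup>2 \<le> q i * q j * ((real i - real j) * (\<Sum>t=Suc j..i. d t))"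
        using q0 by (intro mult_left_mono) auto
      then show ?thesis using True eq by (simp add: mult.assoc)
    next
      case False
      have "(\<Sum>t\<in>N. if j < t \<and> t \<le> i then q i * q j * (real i - real j) * d t else 0) = 0"
      proof (rule sum.neutral, rule ballI)
        fix t assume "t \<in> N"
        have "\<not> (j < t \<and> t \<le> i)" using False by linarith
        thus "(if j < t \<and> t \<le> i then q i * q j * (real i - real j) * d t else 0) = 0" by (simp only: if_False)
      qed
      then show ?thesis using False by simp
    qed
  qed
  also have "(\<Sum>i\<in>N. \<Sum>j\<in>N. \<Sum>t\<in>N. if j < t \<and> t \<le> i then q i * q j * (real i - real j) * d t else 0)
      = (\<Sum>t\<in>N. \<Sum>i\<in>N. \<Sum>j\<in>N. if j < t \<and> t \<le> i then q i * q j * (real i - real j) * d t else 0)"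
  proof -
    define F where "F = (\<lambda>i j t. if j < t \<and> t \<le> i then q i * q j * (real i - real j) * d t else 0)"
    have "(\<Sum>i\<in>N. \<Sum>j\<in>N. \<Sum>t\<in>N. F i j t) = (\<Sum>i\<in>N. \<Sum>t\<in>N. \<Sum>j\<in>N. F i j t)"
      by (rule sum.cong[OF refl], rule sum.swap)
    also have "\<dots> = (\<Sum>t\<in>N. \<Sum>i\<in>N. \<Sum>j\<in>N. F i j t)"
      by (rule sum.swap)
    finally show ?thesis unfolding F_def .
  qed
  also have "\<dots> = (\<Sum>t\<in>N. lam \<beta> n t * d t)"
  proof (intro sum.cong refl)
    fix t assume t: "t \<in> N"
    have A: "{i \<in> N. t \<le> i} = {t..n}" using t unfolding N_def by auto
    have B: "{j \<in> N. j < t} = {1..t-1}" using t unfolding N_def by auto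
    have "(\<Sum>i\<in>N. \<Sum>j\<in>N. if j < t \<and> t \<le> i then q i * q j * (real i - real j) * d t else 0)
        = (\<Sum>i\<in>N. if t \<le> i then (\<Sum>j\<in>N. if j < t then q i * q j * (real i - real j) * d t else 0) else 0)"
      by (intro sum.cong refl) auto
    also have "\<dots> = (\<Sum>i\<in>{t..n}. (\<Sum>j\<in>{1..t-1}. q i * q j * (real i - real j) * d t))"
    proof -
      have "(\<Sum>i\<in>N. if t \<le> i then (\<Sum>j\<in>N. if j < t then q i * q j * (real i - real j) * d t else 0) else 0)
          = (\<Sum>i\<in>N. if t \<le> i then (\<Sum>j\<in>{1..t-1}. q i * q j * (real i - real j) * d t) else 0)"
        by (intro sum.cong refl) (simp add: sum.inter_filter[OF fN(1), symmetric] B)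
      also have "\<dots> = (\<Sum>i\<in>{t..n}. (\<Sum>j\<in>{1..t-1}. q i * q j * (real i - real j) * d t))"
        by (simp add: sum.inter_filter[OF fN(1), symmetric] A)
      finally show ?thesis .
    qed
    also have "\<dots> = lam \<beta> n t * d t" unfolding lam_def q_def by (simp add: sum_distrib_right)
    finally show "(\<Sum>i\<in>N. \<Sum>j\<in>N. if j < t \<and> t \<le> i then q i * q j * (real i - real j) * d t else 0) = lam \<beta> n t * d t" .
  qed
  finally show ?thesis unfolding N_def q_def d_def by simp
qed

end
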